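(* Let $A$ be an $n \times n$ real symmetric matrix and let $\alpha \subseteq \{1,2,\dots,n\}$ with $|\alpha| \geq 2$. Then $\alpha$ is a P-set of $A$ if and only if every subset $\gamma \subseteq \alpha$ with $|\gamma| = 2$ is a P-set of $A$.
   Context: All matrices are real. For an $n\times n$ matrix $A$ and $\alpha \subseteq \{1,\dots,n\}$, $A(\alpha)$ denotes the principal submatrix obtained by deleting the rows and columns indexed by $\alpha$, and $\nu(A)$ denotes the nullity of $A$. A set $\alpha$ is a P-set of $A$ if $\nu(A(\alpha)) = \nu(A) + |\alpha|$. *)

theory Defs
  imports "Jordan_Normal_Form.Matrix_Kernel" "Jordan_Normal_Form.DL_Submatrix"
begin

(* Indices are 0-based: an n x n matrix has index set {0..<n}. *)

definition principal_delete :: "real mat \<Rightarrow> nat set \<Rightarrow> real mat" where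
  "principal_delete A \<alpha> = submatrix A (- \<alpha>) (- \<alpha>)"

definition nullity :: "real mat \<Rightarrow> nat" where
  "nullity A = kernel_dim A"

definition P_set :: "real mat \<Rightarrow> nat set \<Rightarrow> bool" where
  "P_set A \<alpha> \<longleftrightarrow> nullity (principal_delete A \<alpha>) = nullity A + card \<alpha>"

end

theory Submission
  imports Defs "HOL-Library.Function_Algebras"
begin

definition sc :: "real \<Rightarrow> (nat \<Rightarrow> real) \<Rightarrow> (nat \<Rightarrow> real)" where "sc c f = (\<lambda>i. c * f i)"
interpretation F: vector_space sc
  by unfold_locales (auto simp: sc_def algebra_simps fun_eq_iff)

lemma sc_apply[simp]: "sc c f i = c * f i" by (simp add: sc_def)

lemma sum_fun_apply: "(\<Sum>x\<in>S. f x) (i::nat) = (\<Sum>x\<in>S. f x i)" for f :: "'a \<Rightarrow> nat \<Rightarrow> real"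
  by (induct S rule: infinite_finite_induct) auto

definition isb :: "(nat \<Rightarrow> real) set \<Rightarrow> (nat \<Rightarrow> real) set \<Rightarrow> bool" where
  "isb B S \<longleftrightarrow> finite B \<and> F.independent B \<and> B \<subseteq> S \<and> S \<subseteq> F.span B"

lemma isb_card: assumes "isb B S" "isb C S" shows "card B = card C"
proof -
  have "B \<subseteq> F.span C" "C \<subseteq> F.span B" using assms unfolding isb_def by auto
  then show ?thesis using assms unfolding isb_def
    by (meson F.independent_span_bound le_antisym)
qed

lemma bridge:
  fixes M :: "real mat" and P :: "nat \<Rightarrow> bool" and h :: "nat \<Rightarrow> nat"
  assumes M: "M \<in> carrier_mat r c"
    and hP: "\<And>i. P i \<Longrightarrow> h i < c"
    and hsurj: "\<And>j. j < c \<Longrightarrow> \<exists>i. P i \<and> h i = j"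
  shows "\<exists>B. isb B ((\<lambda>v::real vec. (\<lambda>i. if P i then v $ h i else 0)) ` mat_kernel M) \<and> card B = kernel_dim M"
proof -
  define g where "g = (\<lambda>v::real vec. (\<lambda>i. if P i then v $ h i else 0))"
  interpret K: kernel r c M by (unfold_locales, rule M)
  obtain Bs where finB: "finite Bs" and bas: "K.basis Bs" using kernel_basis_exists[OF M] by auto
  have kd: "kernel_dim M = card Bs" using K.Ker.dim_basis[OF finB bas] by simp
  have BsK: "Bs \<subseteq> mat_kernel M" using bas unfolding K.Ker.basis_def by auto
  have kerC: "mat_kernel M \<subseteq> carrier_vec c" using mat_kernel_carrier M by auto
  have ginj: "u = v" if "u \<in> carrier_vec c" "v \<in> carrier_vec c" "g u = g v" for u v
  proof (rule eq_vecI)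
    show "dim_vec u = dim_vec v" using that by auto
    fix j assume "j < dim_vec v"
    then have "j < c" using that by auto
    then obtain i where "P i" "h i = j" using hsurj by blast
    then show "u $ j = v $ j" using fun_cong[OF that(3), of i] unfolding g_def by auto
  qed
  have injB: "inj_on g (mat_kernel M)" using ginj kerC by (meson inj_onI subsetD)
  have glc: "g (K.lincomb a A) = (\<Sum>x\<in>A. sc (a x) (g x))" if "A \<subseteq> mat_kernel M" for a A
  proof
    fix i show "g (K.lincomb a A) i = (\<Sum>x\<in>A. sc (a x) (g x)) i"
      unfolding sum_fun_apply using K.lincomb_index[OF hP that] by (simp add: g_def)
  qed
  show ?thesis unfolding g_def[symmetric]
  proof (intro exI conjI)
    show "card (g ` Bs) = kernel_dim M" using kd card_image injB BsK by (metis inj_on_subset)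
    have span: "g ` mat_kernel M \<subseteq> F.span (g ` Bs)"
    proof
      fix w assume "w \<in> g ` mat_kernel M"
      then obtain v where v: "v \<in> mat_kernel M" "w = g v" by auto
      have "v \<in> K.span Bs" using bas v unfolding K.Ker.basis_def by auto
      then obtain a A where A: "v = K.lincomb a A" "finite A" "A \<subseteq> Bs"
        unfolding K.Ker.span_def by auto
      have "w = (\<Sum>x\<in>A. sc (a x) (g x))" using A glc BsK v by auto
      also have "\<dots> \<in> F.span (g ` Bs)"
        by (intro F.span_sum F.span_scale F.span_base) (use A in auto)
      finally show "w \<in> F.span (g ` Bs)" .
    qed
    show "isb (g ` Bs) (g ` mat_kernel M)" unfolding isb_def
    proof (intro conjI)
      show "finite (g ` Bs)" using finB by auto
      show "g ` Bs \<subseteq> g ` mat_kernel M" using BsK by auto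
      show "g ` mat_kernel M \<subseteq> F.span (g ` Bs)" by (rule span)
      show "F.independent (g ` Bs)"
      proof
        assume "F.dependent (g ` Bs)"
        then obtain u where u: "\<exists>v\<in>g ` Bs. u v \<noteq> 0" "(\<Sum>v\<in>g ` Bs. sc (u v) v) = 0"
          using F.dependent_finite finB by blast
        define a where "a = (\<lambda>x. u (g x))"
        have injBs: "inj_on g Bs" using injB BsK inj_on_subset by blast
        have "(\<Sum>x\<in>Bs. sc (a x) (g x)) = 0"
          using u(2) unfolding sum.reindex[OF injBs] a_def by simp
        then have lc0: "g (K.lincomb a Bs) = 0" using glc BsK by simp
        have lcK: "K.lincomb a Bs \<in> mat_kernel M"
          using K.Ker.lincomb_closed BsK by auto
        have "K.lincomb a Bs = 0\<^sub>v c"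
          by (rule ginj) (use lcK kerC lc0 hP in \<open>auto simp: g_def fun_eq_iff\<close>)
        moreover obtain x0 where "x0 \<in> Bs" "a x0 \<noteq> 0" using u(1) a_def by auto
        ultimately have "K.lin_dep Bs" unfolding K.Ker.lin_dep_def
          using finB by (intro exI[of _ Bs] exI[of _ a] exI[of _ x0]) auto
        then show False using bas unfolding K.Ker.basis_def by auto
      qed
    qed
  qed
qed

interpretation FF: vector_space_pair sc sc ..

lemma indep_span_disj:
  assumes ind: "F.independent (S \<union> T)" and fin: "finite S" "finite T" and dis: "S \<inter> T = {}"
    and xS: "x \<in> F.span S" and xT: "x \<in> F.span T"
  shows "x = 0"
proof -
  obtain u where u: "x = (\<Sum>v\<in>S. sc (u v) v)" using xS F.span_finite[OF fin(1)] by auto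
  obtain w where w: "x = (\<Sum>v\<in>T. sc (w v) v)" using xT F.span_finite[OF fin(2)] by auto
  define c where "c = (\<lambda>v. if v \<in> S then u v else - w v)"
  have "(\<Sum>v\<in>S \<union> T. sc (c v) v) = (\<Sum>v\<in>S. sc (c v) v) + (\<Sum>v\<in>T. sc (c v) v)"
    using sum.union_disjoint[OF fin dis] by simp
  also have "(\<Sum>v\<in>S. sc (c v) v) = x" unfolding u c_def by (rule sum.cong) auto
  also have "(\<Sum>v\<in>T. sc (c v) v) = (\<Sum>v\<in>T. - sc (w v) v)" unfolding c_def
    using dis by (intro sum.cong) (auto simp: sc_def fun_eq_iff)
  also have "\<dots> = - x" unfolding w by (simp add: sum_negf)
  finally have "(\<Sum>v\<in>S \<union> T. sc (c v) v) = x + - x" .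
  then have "(\<Sum>v\<in>S \<union> T. sc (c v) v) = 0" by (simp only: add.right_inverse)
  then have c0: "\<forall>v\<in>S \<union> T. c v = 0" using ind F.dependent_finite[of "S \<union> T"] fin by blast
  have "x = (\<Sum>v\<in>S. sc (c v) v)" unfolding u c_def by (rule sum.cong) auto
  also have "\<dots> = 0" using c0 by (simp add: sc_def fun_eq_iff sum_fun_apply)
  finally show ?thesis .
qed

lemma full_span:
  assumes ind: "F.independent S" and SV: "S \<subseteq> V" and VT: "V \<subseteq> F.span T" and finT: "finite T"
    and cS: "card T \<le> card S"
  shows "V \<subseteq> F.span S"
proof
  fix v assume v: "v \<in> V"
  show "v \<in> F.span S"
  proof (rule ccontr)
    assume nv: "v \<notin> F.span S"
    have i2: "F.independent (insert v S)" using F.independent_insertI[OF nv ind] .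
    have "insert v S \<subseteq> F.span T" using SV VT v by blast
    from F.independent_span_bound[OF finT i2 this]
    have b: "finite (insert v S) \<and> card (insert v S) \<le> card T" .
    have "v \<notin> S" using nv F.span_superset[of S] by blast
    have fS: "finite S" using b by simp
    have "card (insert v S) = Suc (card S)" using card_insert_disjoint[OF fS \<open>v \<notin> S\<close>] .
    then show False using b cS by linarith
  qed
qed

definition Av :: "real mat \<Rightarrow> nat \<Rightarrow> (nat \<Rightarrow> real) \<Rightarrow> (nat \<Rightarrow> real)" where
  "Av A n f = (\<lambda>i. if i < n then (\<Sum>j<n. A $$ (i,j) * f j) else 0)"
definition Vn :: "nat \<Rightarrow> (nat \<Rightarrow> real) set" where "Vn n = {f. \<forall>i. n \<le> i \<longrightarrow> f i = 0}"
definition ee :: "nat \<Rightarrow> nat \<Rightarrow> real" where "ee i = (\<lambda>l. if l = i then 1 else 0)"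
definition NN where "NN A n = {f \<in> Vn n. Av A n f = 0}"
definition ZZ where "ZZ A n \<alpha> = {f \<in> Vn n. (\<forall>i\<in>\<alpha>. f i = 0) \<and> (\<forall>i<n. i \<notin> \<alpha> \<longrightarrow> Av A n f i = 0)}"
definition DD where "DD A n \<alpha> \<longleftrightarrow> (\<forall>i\<in>\<alpha>. (\<exists>y\<in>Vn n. Av A n y = ee i) \<and>
    (\<forall>j\<in>\<alpha>. \<forall>y\<in>Vn n. Av A n y = ee i \<longrightarrow> y j = 0))"

lemma Av_linear: "Vector_Spaces.linear sc sc (Av A n)"
  unfolding Vector_Spaces.linear_iff
proof (intro conjI allI)
  show "vector_space sc" by (rule F.vector_space_axioms)
  show "vector_space sc" by (rule F.vector_space_axioms)
  fix x y :: "nat \<Rightarrow> real" and c :: real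
  show "Av A n (x + y) = Av A n x + Av A n y"
    unfolding Av_def by (rule ext) (simp add: distrib_left sum.distrib)
  show "Av A n (sc c x) = sc c (Av A n x)"
    unfolding Av_def by (rule ext) (simp add: sum_distrib_left mult.left_commute)
qed

lemma Av_Vn: "Av A n f \<in> Vn n" by (simp add: Av_def Vn_def)

lemma subspace_Vn: "F.subspace (Vn n)" unfolding F.subspace_def Vn_def by auto

lemma subspace_NN: "F.subspace (NN A n)"
proof (rule F.subspaceI)
  note L = FF.linear_add[OF Av_linear[of A n]] FF.linear_scale[OF Av_linear[of A n]] FF.linear_0[OF Av_linear[of A n]]
  show "0 \<in> NN A n" unfolding NN_def Vn_def using L(3) by simp
  fix x y c assume x: "x \<in> NN A n" and y: "y \<in> NN A n"
  show "x + y \<in> NN A n" using x y L(1)[of x y] unfolding NN_def Vn_def by simp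
  show "sc c x \<in> NN A n" using x L(2)[of c x] unfolding NN_def Vn_def by simp
qed

lemma subspace_ZZ: "F.subspace (ZZ A n \<alpha>)"
proof (rule F.subspaceI)
  note L = FF.linear_add[OF Av_linear[of A n]] FF.linear_scale[OF Av_linear[of A n]] FF.linear_0[OF Av_linear[of A n]]
  show "0 \<in> ZZ A n \<alpha>" unfolding ZZ_def Vn_def using L(3) by simp
  fix x y c assume x: "x \<in> ZZ A n \<alpha>" and y: "y \<in> ZZ A n \<alpha>"
  show "x + y \<in> ZZ A n \<alpha>" using x y L(1)[of x y] unfolding ZZ_def Vn_def by simp
  show "sc c x \<in> ZZ A n \<alpha>" using x L(2)[of c x] unfolding ZZ_def Vn_def by simp
qed



lemma Av_ZZ_expand:
  assumes z: "z \<in> ZZ A n \<alpha>" and fin: "finite \<alpha>"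
  shows "Av A n z = (\<Sum>i\<in>\<alpha>. sc (Av A n z i) (ee i))"
proof
  fix l
  have "(\<Sum>i\<in>\<alpha>. sc (Av A n z i) (ee i)) l = (\<Sum>i\<in>\<alpha>. (if i = l then Av A n z l else 0))"
    unfolding sum_fun_apply by (rule sum.cong) (auto simp: ee_def)
  also have "\<dots> = (if l \<in> \<alpha> then Av A n z l else 0)" using fin by (simp add: sum.delta)
  also have "\<dots> = Av A n z l" using z unfolding ZZ_def by (auto simp: Av_def)
  finally show "Av A n z l = (\<Sum>i\<in>\<alpha>. sc (Av A n z i) (ee i)) l" by simp
qed

lemma ee_inj: "inj ee"
proof (rule injI)
  fix i j assume "ee i = ee j"
  then have "ee i i = ee j i" by simp
  then show "i = j" by (simp add: ee_def split: if_splits)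
qed

lemma dir1:
  assumes \<alpha>n: "\<alpha> \<subseteq> {0..<n}" and bN: "isb BN (NN A n)" and bZ: "isb BZ (ZZ A n \<alpha>)"
    and cc: "card BZ = card BN + card \<alpha>"
  shows "DD A n \<alpha>"
proof -
  note lin = Av_linear[of A n]
  define U where "U = NN A n \<inter> ZZ A n \<alpha>"
  have fin\<alpha>: "finite \<alpha>" using \<alpha>n finite_subset by blast
  have subU: "F.subspace U" unfolding U_def by (intro F.subspace_inter subspace_NN subspace_ZZ)
  obtain BU where BU: "BU \<subseteq> U" "F.independent BU" "U \<subseteq> F.span BU"
    using F.maximal_independent_subset_extend[of "{}" U] F.independent_empty by auto
  have finBN: "finite BN" and NspanBN: "NN A n \<subseteq> F.span BN" using bN unfolding isb_def by auto
  have finBZ: "finite BZ" and ZspanBZ: "ZZ A n \<alpha> \<subseteq> F.span BZ" using bZ unfolding isb_def by auto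
  have "BU \<subseteq> F.span BN" using BU(1) NspanBN unfolding U_def by blast
  from F.independent_span_bound[OF finBN BU(2) this]
  have finBU: "finite BU" and cBU: "card BU \<le> card BN" by auto
  obtain B' where B': "BU \<subseteq> B'" "B' \<subseteq> ZZ A n \<alpha>" "F.independent B'" "ZZ A n \<alpha> \<subseteq> F.span B'"
    using F.maximal_independent_subset_extend[of BU "ZZ A n \<alpha>"] BU(1,2) unfolding U_def by blast
  have "B' \<subseteq> F.span BZ" using B'(2) ZspanBZ by blast
  from F.independent_span_bound[OF finBZ B'(3) this] have finB': "finite B'" by auto
  have "isb B' (ZZ A n \<alpha>)" unfolding isb_def using finB' B' by auto
  then have cB': "card B' = card BZ" using isb_card bZ by blast
  define C where "C = B' - BU"
  have B'eq: "B' = BU \<union> C" "BU \<inter> C = {}" using B'(1) unfolding C_def by auto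
  have finC: "finite C" using finB' unfolding C_def by auto
  have cB'2: "card B' = card BU + card C" using B'eq finBU finC card_Un_disjoint by metis
  have CZ: "C \<subseteq> ZZ A n \<alpha>" using B'(2) unfolding C_def by auto
  have spanCZ: "F.span C \<subseteq> ZZ A n \<alpha>" by (rule F.span_minimal[OF CZ subspace_ZZ])
  have inj: "inj_on (Av A n) (F.span C)"
    unfolding FF.linear_inj_on_iff_eq_0[OF lin F.subspace_span]
  proof (intro ballI impI)
    fix x assume x: "x \<in> F.span C" and ax: "Av A n x = 0"
    have "x \<in> ZZ A n \<alpha>" using x spanCZ by blast
    then have "x \<in> U" using ax unfolding U_def NN_def ZZ_def by auto
    then have "x \<in> F.span BU" using BU(3) by blast
    show "x = 0"
      by (rule indep_span_disj[of BU C]) (use B'eq B'(3) finBU finC \<open>x \<in> F.span BU\<close> x in auto)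
  qed
  have indC: "F.independent C" using B'(3) F.independent_mono unfolding C_def by blast
  have indAC: "F.independent (Av A n ` C)"
    by (rule FF.linear_independent_injective_image[OF lin indC inj])
  have cardAC: "card (Av A n ` C) = card C"
    using card_image inj_on_subset[OF inj F.span_superset] by blast
  define E where "E = ee ` \<alpha>"
  have finE: "finite E" using fin\<alpha> unfolding E_def by auto
  have cardE: "card E = card \<alpha>" unfolding E_def using ee_inj card_image inj_on_subset by blast
  have AvZ: "Av A n z \<in> F.span E" if "z \<in> ZZ A n \<alpha>" for z
  proof -
    have "Av A n z = (\<Sum>i\<in>\<alpha>. sc (Av A n z i) (ee i))" by (rule Av_ZZ_expand[OF that fin\<alpha>])
    also have "\<dots> \<in> F.span E"
      by (intro F.span_sum F.span_scale F.span_base) (auto simp: E_def)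
    finally show ?thesis .
  qed
  have ACE: "Av A n ` C \<subseteq> F.span E" using AvZ CZ by blast
  from F.independent_span_bound[OF finE indAC ACE]
  have "card (Av A n ` C) \<le> card E" by auto
  then have cC: "card C \<le> card \<alpha>" using cardAC cardE by simp
  have eqBU: "card BU = card BN" and eqC: "card C = card \<alpha>"
    using cc cB' cB'2 cBU cC by linarith+
  have NspanBU: "NN A n \<subseteq> F.span BU"
    by (rule full_span[OF BU(2) _ NspanBN finBN]) (use BU(1) eqBU in \<open>auto simp: U_def\<close>)
  have spanBU: "F.span BU \<subseteq> U" by (rule F.span_minimal[OF BU(1) subU])
  have Nvan: "x j = 0" if "x \<in> NN A n" "j \<in> \<alpha>" for x j
    using that NspanBU spanBU unfolding U_def ZZ_def by blast
  have Espan: "F.span E \<subseteq> F.span (Av A n ` C)"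
    by (rule full_span[OF indAC ACE _ finE]) (use cardAC eqC cardE in auto)
  have ex: "\<exists>z\<in>ZZ A n \<alpha>. Av A n z = ee i" if "i \<in> \<alpha>" for i
  proof -
    have "ee i \<in> F.span E" using that unfolding E_def by (intro F.span_base) auto
    then have "ee i \<in> Av A n ` F.span C" using Espan FF.linear_span_image[OF lin, of C] by auto
    then obtain x where "x \<in> F.span C" "ee i = Av A n x" by auto
    then show ?thesis using spanCZ by auto
  qed
  show ?thesis unfolding DD_def
  proof (rule ballI)
    fix i assume i: "i \<in> \<alpha>"
    obtain z where z: "z \<in> ZZ A n \<alpha>" "Av A n z = ee i" using ex[OF i] by auto
    have zV: "z \<in> Vn n" using z unfolding ZZ_def by auto
    have "\<exists>y\<in>Vn n. Av A n y = ee i" using z zV by auto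
    moreover have "\<forall>j\<in>\<alpha>. \<forall>y\<in>Vn n. Av A n y = ee i \<longrightarrow> y j = 0"
    proof (intro ballI impI)
      fix j y assume j: "j \<in> \<alpha>" and y: "y \<in> Vn n" and ay: "Av A n y = ee i"
      have "y - z \<in> NN A n" unfolding NN_def
        using y zV FF.linear_diff[OF lin, of y z] ay z(2) by (auto simp: Vn_def)
      then have "(y - z) j = 0" using Nvan j by blast
      moreover have "z j = 0" using z j unfolding ZZ_def by auto
      ultimately show "y j = 0" by simp
    qed
    ultimately show "(\<exists>y\<in>Vn n. Av A n y = ee i) \<and> (\<forall>j\<in>\<alpha>. \<forall>y\<in>Vn n. Av A n y = ee i \<longrightarrow> y j = 0)" by blast
  qed
qed


lemma sym_sum:
  assumes Acar: "A \<in> carrier_mat n n" and Asym: "A\<^sup>T = A"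
  shows "(\<Sum>l<n. x l * Av A n y l) = (\<Sum>l<n. Av A n x l * y l)"
proof -
  have s: "A $$ (i,j) = A $$ (j,i)" if "i < n" "j < n" for i j
  proof -
    have "A\<^sup>T $$ (j,i) = A $$ (i,j)" using that Acar by simp
    then show ?thesis using Asym by simp
  qed
  have "(\<Sum>l<n. x l * Av A n y l) = (\<Sum>l<n. \<Sum>j<n. x l * A $$ (l,j) * y j)"
    unfolding Av_def by (simp add: sum_distrib_left mult.assoc)
  also have "\<dots> = (\<Sum>j<n. \<Sum>l<n. x l * A $$ (l,j) * y j)" by (rule sum.swap)
  also have "\<dots> = (\<Sum>j<n. \<Sum>l<n. A $$ (j,l) * x l * y j)"
    by (intro sum.cong refl) (simp add: s mult.commute)
  also have "\<dots> = (\<Sum>l<n. Av A n x l * y l)"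
    unfolding Av_def by (simp add: sum_distrib_right)
  finally show ?thesis .
qed

lemma dir2:
  assumes Acar: "A \<in> carrier_mat n n" and Asym: "A\<^sup>T = A"
    and \<alpha>n: "\<alpha> \<subseteq> {0..<n}" and bN: "isb BN (NN A n)" and D: "DD A n \<alpha>"
  shows "\<exists>B. isb B (ZZ A n \<alpha>) \<and> card B = card BN + card \<alpha>"
proof -
  note lin = Av_linear[of A n]
  have fin\<alpha>: "finite \<alpha>" using \<alpha>n finite_subset by blast
  have finBN: "finite BN" and NspanBN: "NN A n \<subseteq> F.span BN" and BNN: "BN \<subseteq> NN A n"
    and indBN: "F.independent BN" using bN unfolding isb_def by auto
  define y where "y = (\<lambda>i. SOME y. y \<in> Vn n \<and> Av A n y = ee i)"
  have yprop: "y i \<in> Vn n \<and> Av A n (y i) = ee i" if "i \<in> \<alpha>" for i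
  proof -
    have "\<exists>y. y \<in> Vn n \<and> Av A n y = ee i" using D that unfolding DD_def by blast
    then show ?thesis unfolding y_def by (rule someI_ex)
  qed
  have yvan: "y i j = 0" if "i \<in> \<alpha>" "j \<in> \<alpha>" for i j
    using D that yprop[OF that(1)] unfolding DD_def by blast
  have NZ: "NN A n \<subseteq> ZZ A n \<alpha>"
  proof
    fix x assume x: "x \<in> NN A n"
    have xv: "x j = 0" if j: "j \<in> \<alpha>" for j
    proof -
      have jn: "j < n" using j \<alpha>n by auto
      have "x j = (\<Sum>l<n. x l * ee j l)"
        using jn by (simp add: ee_def if_distrib cong: if_cong)
      also have "\<dots> = (\<Sum>l<n. x l * Av A n (y j) l)" using yprop[OF j] by simp
      also have "\<dots> = (\<Sum>l<n. Av A n x l * y j l)" by (rule sym_sum[OF Acar Asym])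
      also have "\<dots> = 0" using x unfolding NN_def by simp
      finally show ?thesis .
    qed
    then show "x \<in> ZZ A n \<alpha>" using x unfolding NN_def ZZ_def by auto
  qed
  define Y where "Y = y ` \<alpha>"
  have yinj: "inj_on y \<alpha>"
  proof (rule inj_onI)
    fix i j assume "i \<in> \<alpha>" "j \<in> \<alpha>" "y i = y j"
    then have "ee i = ee j" using yprop by metis
    then show "i = j" using ee_inj by (simp add: inj_eq)
  qed
  have finY: "finite Y" using fin\<alpha> unfolding Y_def by auto
  have YZ: "Y \<subseteq> ZZ A n \<alpha>"
  proof
    fix v assume "v \<in> Y"
    then obtain i where i: "i \<in> \<alpha>" "v = y i" unfolding Y_def by auto
    show "v \<in> ZZ A n \<alpha>" unfolding ZZ_def
      using yprop[OF i(1)] yvan[OF i(1)] i by (auto simp: ee_def)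
  qed
  have disj: "BN \<inter> Y = {}"
  proof (rule ccontr)
    assume "BN \<inter> Y \<noteq> {}"
    then obtain i where i: "i \<in> \<alpha>" "y i \<in> BN" unfolding Y_def by auto
    then have "Av A n (y i) = 0" using BNN unfolding NN_def by auto
    then have "ee i i = 0" using yprop[OF i(1)] by simp
    then show False by (simp add: ee_def)
  qed
  have spanY: "ZZ A n \<alpha> \<subseteq> F.span (BN \<union> Y)"
  proof
    fix z assume z: "z \<in> ZZ A n \<alpha>"
    define s where "s = (\<Sum>i\<in>\<alpha>. sc (Av A n z i) (y i))"
    have "Av A n s = (\<Sum>i\<in>\<alpha>. sc (Av A n z i) (Av A n (y i)))"
      unfolding s_def FF.linear_sum[OF lin] FF.linear_scale[OF lin] ..
    also have "\<dots> = (\<Sum>i\<in>\<alpha>. sc (Av A n z i) (ee i))"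
      using yprop by (intro sum.cong) auto
    also have "\<dots> = Av A n z" using Av_ZZ_expand[OF z fin\<alpha>] by simp
    finally have as: "Av A n s = Av A n z" .
    have sV: "s \<in> Vn n" unfolding s_def
      by (intro F.subspace_sum[OF subspace_Vn] F.subspace_scale[OF subspace_Vn]) (use yprop in auto)
    have zV: "z \<in> Vn n" using z unfolding ZZ_def by auto
    have "z - s \<in> NN A n" unfolding NN_def
      using F.subspace_diff[OF subspace_Vn zV sV] FF.linear_diff[OF lin, of z s] as by auto
    then have "z - s \<in> F.span (BN \<union> Y)" using NspanBN F.span_mono[of BN "BN \<union> Y"] by blast
    moreover have "s \<in> F.span (BN \<union> Y)" unfolding s_def
      by (intro F.span_sum F.span_scale F.span_base) (auto simp: Y_def)
    ultimately have "(z - s) + s \<in> F.span (BN \<union> Y)" by (rule F.span_add)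
    then show "z \<in> F.span (BN \<union> Y)" by simp
  qed
  have ind: "F.independent (BN \<union> Y)"
  proof
    assume "F.dependent (BN \<union> Y)"
    then obtain u where u: "\<exists>v\<in>BN \<union> Y. u v \<noteq> 0" "(\<Sum>v\<in>BN \<union> Y. sc (u v) v) = 0"
      using F.dependent_finite finBN finY by blast
    have split: "(\<Sum>v\<in>BN \<union> Y. sc (u v) v) = (\<Sum>v\<in>BN. sc (u v) v) + (\<Sum>v\<in>Y. sc (u v) v)"
      using sum.union_disjoint[OF finBN finY disj] by simp
    have "Av A n (\<Sum>v\<in>BN. sc (u v) v) = (\<Sum>v\<in>BN. sc (u v) (Av A n v))"
      unfolding FF.linear_sum[OF lin] FF.linear_scale[OF lin] ..
    also have "\<dots> = 0"
    proof (intro sum.neutral ballI)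
      fix v assume "v \<in> BN"
      then have "Av A n v = 0" using BNN unfolding NN_def by auto
      then show "sc (u v) (Av A n v) = 0" by simp
    qed
    finally have a1: "Av A n (\<Sum>v\<in>BN. sc (u v) v) = 0" .
    have "Av A n (\<Sum>v\<in>Y. sc (u v) v) = (\<Sum>v\<in>Y. sc (u v) (Av A n v))"
      unfolding FF.linear_sum[OF lin] FF.linear_scale[OF lin] ..
    also have "\<dots> = (\<Sum>i\<in>\<alpha>. sc (u (y i)) (Av A n (y i)))"
      unfolding Y_def by (rule sum.reindex[OF yinj, unfolded comp_def])
    also have "\<dots> = (\<Sum>i\<in>\<alpha>. sc (u (y i)) (ee i))" using yprop by (intro sum.cong) auto
    finally have a2: "Av A n (\<Sum>v\<in>Y. sc (u v) v) = (\<Sum>i\<in>\<alpha>. sc (u (y i)) (ee i))" .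
    have "Av A n (\<Sum>v\<in>BN \<union> Y. sc (u v) v) = 0" using u(2) FF.linear_0[OF lin] by simp
    then have sum0: "(\<Sum>i\<in>\<alpha>. sc (u (y i)) (ee i)) = 0"
      unfolding split FF.linear_add[OF lin] a1 a2 by simp
    have uY: "u v = 0" if "v \<in> Y" for v
    proof -
      obtain i where i: "i \<in> \<alpha>" "v = y i" using \<open>v \<in> Y\<close> unfolding Y_def by auto
      have "(\<Sum>j\<in>\<alpha>. sc (u (y j)) (ee j)) i = 0" using sum0 by simp
      then have "(\<Sum>j\<in>\<alpha>. (if i = j then u (y j) else 0)) = 0"
        unfolding sum_fun_apply by (simp add: ee_def if_distrib cong: if_cong)
      then show ?thesis using i fin\<alpha> by simp
    qed
    have "(\<Sum>v\<in>Y. sc (u v) v) = 0" using uY by (intro sum.neutral) (auto simp: sc_def)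
    then have "(\<Sum>v\<in>BN. sc (u v) v) = 0" using u(2) split by simp
    then have "\<forall>v\<in>BN. u v = 0" using indBN F.dependent_finite[OF finBN] by blast
    then show False using u(1) uY by blast
  qed
  show ?thesis
  proof (intro exI conjI)
    show "isb (BN \<union> Y) (ZZ A n \<alpha>)" unfolding isb_def
      using finBN finY ind BNN NZ YZ spanY by auto
    show "card (BN \<union> Y) = card BN + card \<alpha>"
      using card_Un_disjoint[OF finBN finY disj] card_image[OF yinj] unfolding Y_def by simp
  qed
qed



lemma Mv_index:
  assumes M: "M \<in> carrier_mat m m" and v: "v \<in> carrier_vec m" and i: "i < m"
  shows "(M *\<^sub>v v) $ i = (\<Sum>j<m. M $$ (i,j) * v $ j)"
  using M v i by (simp add: scalar_prod_def lessThan_atLeast0)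

lemma kerimg:
  fixes A M :: "real mat"
  assumes M: "M \<in> carrier_mat m m" and \<beta>n: "\<beta> \<subseteq> {..<n}"
    and p1: "\<And>j. j < m \<Longrightarrow> p j \<in> \<beta> \<and> h (p j) = j"
    and p2: "\<And>i. i \<in> \<beta> \<Longrightarrow> h i < m \<and> p (h i) = i"
    and ent: "\<And>i j. i < m \<Longrightarrow> j < m \<Longrightarrow> M $$ (i,j) = A $$ (p i, p j)"
  shows "(\<lambda>v::real vec. (\<lambda>i. if i \<in> \<beta> then v $ h i else 0)) ` mat_kernel M =
    {f. (\<forall>i. i \<notin> \<beta> \<longrightarrow> f i = 0) \<and> (\<forall>i\<in>\<beta>. (\<Sum>j<n. A $$ (i,j) * f j) = 0)}"
    (is "?g ` _ = ?R")
proof -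
  have bij: "bij_betw p {..<m} \<beta>"
    by (rule bij_betw_byWitness[where f'=h]) (use p1 p2 in auto)
  have sumre: "(\<Sum>j<n. A $$ (i,j) * f j) = (\<Sum>j'<m. A $$ (i, p j') * f (p j'))"
    if f: "\<forall>i. i \<notin> \<beta> \<longrightarrow> f i = 0" for f i
  proof -
    have "(\<Sum>j<n. A $$ (i,j) * f j) = (\<Sum>j\<in>\<beta>. A $$ (i,j) * f j)"
      by (rule sum.mono_neutral_right) (use \<beta>n f in auto)
    also have "\<dots> = (\<Sum>j'<m. A $$ (i, p j') * f (p j'))"
      by (rule sum.reindex_bij_betw[OF bij, symmetric])
    finally show ?thesis .
  qed
  have gvan: "\<forall>i. i \<notin> \<beta> \<longrightarrow> ?g v i = 0" for v by simp
  have gp: "?g v (p j) = v $ j" if "j < m" for v j using p1[OF that] by simp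
  have key: "(M *\<^sub>v v) $ i' = (\<Sum>j<n. A $$ (p i', j) * ?g v j)" if v: "v \<in> carrier_vec m" and i': "i' < m" for v i'
  proof -
    have "(M *\<^sub>v v) $ i' = (\<Sum>j<m. M $$ (i',j) * v $ j)" by (rule Mv_index[OF M v i'])
    also have "\<dots> = (\<Sum>j'<m. A $$ (p i', p j') * ?g v (p j'))"
      by (intro sum.cong refl) (simp add: ent i' gp)
    also have "\<dots> = (\<Sum>j<n. A $$ (p i', j) * ?g v j)" by (rule sumre[symmetric]) simp
    finally show ?thesis .
  qed
  have Mdim: "dim_row M = m" "dim_col M = m" using M by auto
  show ?thesis
  proof (rule subset_antisym; rule subsetI)
    fix f assume "f \<in> ?g ` mat_kernel M"
    then obtain v where v: "v \<in> carrier_vec m" "M *\<^sub>v v = 0\<^sub>v m" "f = ?g v"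
      unfolding mat_kernel_def Mdim by auto
    have "(\<Sum>j<n. A $$ (i,j) * f j) = 0" if i: "i \<in> \<beta>" for i
    proof -
      have "0 = (M *\<^sub>v v) $ h i" using v(2) p2[OF i] by simp
      also have "\<dots> = (\<Sum>j<n. A $$ (i, j) * f j)" using key[OF v(1)] p2[OF i] v(3) by simp
      finally show ?thesis by simp
    qed
    then show "f \<in> ?R" using v(3) by auto
  next
    fix f assume f: "f \<in> ?R"
    define v where "v = vec m (\<lambda>j. f (p j))"
    have vc: "v \<in> carrier_vec m" unfolding v_def by simp
    have gv: "?g v = f"
    proof
      fix i show "?g v i = f i" using f p2 unfolding v_def by auto
    qed
    have "M *\<^sub>v v = 0\<^sub>v m"
    proof (rule eq_vecI)
      fix i' assume "i' < dim_vec (0\<^sub>v m :: real vec)"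
      then have i': "i' < m" by simp
      have "(M *\<^sub>v v) $ i' = (\<Sum>j<n. A $$ (p i', j) * f j)" using key[OF vc i'] fun_cong[OF gv] by simp
      also have "\<dots> = 0" using f p1[OF i'] by auto
      finally show "(M *\<^sub>v v) $ i' = 0\<^sub>v m $ i'" using i' by simp
    qed (use M in simp)
    then have "v \<in> mat_kernel M" unfolding mat_kernel_def Mdim using vc by simp
    then show "f \<in> ?g ` mat_kernel M" using gv by force
  qed
qed

lemma nullity_NN:
  assumes Acar: "A \<in> carrier_mat n n"
  shows "\<exists>B. isb B (NN A n) \<and> card B = nullity A"
proof -
  have img: "(\<lambda>v::real vec. (\<lambda>i. if i \<in> {..<n} then v $ id i else 0)) ` mat_kernel A =
    {f. (\<forall>i. i \<notin> {..<n} \<longrightarrow> f i = 0) \<and> (\<forall>i\<in>{..<n}. (\<Sum>j<n. A $$ (i,j) * f j) = 0)}"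
    by (rule kerimg[OF Acar]) auto
  have eq: "\<dots> = NN A n" unfolding NN_def Vn_def Av_def
    by (auto simp: fun_eq_iff not_less)
  have imgN: "(\<lambda>v::real vec. (\<lambda>i. if i \<in> {..<n} then v $ id i else 0)) ` mat_kernel A = NN A n"
    using img eq by (rule trans)
  have "\<exists>B. isb B (NN A n) \<and> card B = kernel_dim A"
    unfolding imgN[symmetric] by (rule bridge[OF Acar]) auto
  then show ?thesis unfolding nullity_def .
qed

lemma infinite_compl: assumes "finite (\<alpha>::nat set)" shows "infinite (- \<alpha>)"
proof
  assume "finite (- \<alpha>)"
  then have "finite (\<alpha> \<union> - \<alpha>)" using assms by simp
  then show False by simp
qed

lemma nullity_ZZ:
  assumes Acar: "A \<in> carrier_mat n n" and \<alpha>n: "\<alpha> \<subseteq> {0..<n}"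
  shows "\<exists>B. isb B (ZZ A n \<alpha>) \<and> card B = nullity (principal_delete A \<alpha>)"
proof -
  define S where "S = - \<alpha>"
  define m where "m = card {i. i < n \<and> i \<in> S}"
  define \<beta> where "\<beta> = {i. i < n \<and> i \<in> S}"
  define h where "h = (\<lambda>i. card {a\<in>S. a < i})"
  define M where "M = principal_delete A \<alpha>"
  have infS: "infinite S" unfolding S_def using \<alpha>n finite_subset infinite_compl by blast
  have "dim_row M = m" "dim_col M = m" unfolding M_def principal_delete_def dim_submatrix m_def S_def
    using Acar by auto
  then have Mc: "M \<in> carrier_mat m m" by (intro carrier_matI)
  have finb: "finite \<beta>" unfolding \<beta>_def by simp
  have mb: "m = card \<beta>" unfolding m_def \<beta>_def ..
  have bset: "\<beta> = {a\<in>S. a < n}" unfolding \<beta>_def by auto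
  have p1: "pick S j \<in> \<beta> \<and> h (pick S j) = j" if j: "j < m" for j
  proof -
    have inS: "pick S j \<in> S" using pick_in_set infS by blast
    have hj: "h (pick S j) = j" unfolding h_def using card_pick infS by blast
    have "pick S j < n"
    proof (rule ccontr)
      assume "\<not> pick S j < n"
      then have "{a\<in>S. a < n} \<subseteq> {a\<in>S. a < pick S j}" by auto
      then have "card {a\<in>S. a < n} \<le> card {a\<in>S. a < pick S j}" by (intro card_mono) auto
      then show False using hj j unfolding h_def mb bset by simp
    qed
    then show ?thesis using inS hj unfolding \<beta>_def by auto
  qed
  have p2: "h i < m \<and> pick S (h i) = i" if i: "i \<in> \<beta>" for i
  proof
    have "{a\<in>S. a < i} \<subset> {a\<in>S. a < n}" using i unfolding \<beta>_def by auto
    then show "h i < m" unfolding h_def mb bset by (intro psubset_card_mono) auto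
    show "pick S (h i) = i" unfolding h_def using pick_card_in_set i unfolding \<beta>_def by blast
  qed
  have ent: "M $$ (i,j) = A $$ (pick S i, pick S j)" if "i < m" "j < m" for i j
    unfolding M_def principal_delete_def S_def[symmetric]
    by (rule submatrix_index) (use that Acar in \<open>auto simp: m_def\<close>)
  have img: "(\<lambda>v::real vec. (\<lambda>i. if i \<in> \<beta> then v $ h i else 0)) ` mat_kernel M =
    {f. (\<forall>i. i \<notin> \<beta> \<longrightarrow> f i = 0) \<and> (\<forall>i\<in>\<beta>. (\<Sum>j<n. A $$ (i,j) * f j) = 0)}"
    by (rule kerimg[OF Mc _ p1 p2 ent]) (auto simp: \<beta>_def)
  have eq: "\<dots> = ZZ A n \<alpha>" unfolding ZZ_def Vn_def Av_def \<beta>_def S_def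
    by (auto simp: fun_eq_iff not_less)
  have imgZ: "(\<lambda>v::real vec. (\<lambda>i. if i \<in> \<beta> then v $ h i else 0)) ` mat_kernel M = ZZ A n \<alpha>"
    using img eq by (rule trans)
  have "\<exists>B. isb B (ZZ A n \<alpha>) \<and> card B = kernel_dim M"
    unfolding imgZ[symmetric]
  proof (rule bridge[OF Mc])
    show "\<And>i. i \<in> \<beta> \<Longrightarrow> h i < m" using p2 by blast
    show "\<exists>i. i \<in> \<beta> \<and> h i = j" if "j < m" for j using p1[OF that] by blast
  qed
  then show ?thesis unfolding nullity_def M_def[symmetric] .
qed


lemma charP:
  assumes Acar: "A \<in> carrier_mat n n" and Asym: "A\<^sup>T = A" and \<alpha>n: "\<alpha> \<subseteq> {0..<n}"
  shows "P_set A \<alpha> \<longleftrightarrow> DD A n \<alpha>"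
proof -
  obtain BN where bN: "isb BN (NN A n)" "card BN = nullity A" using nullity_NN[OF Acar] by blast
  obtain BZ where bZ: "isb BZ (ZZ A n \<alpha>)" "card BZ = nullity (principal_delete A \<alpha>)"
    using nullity_ZZ[OF Acar \<alpha>n] by blast
  show ?thesis
  proof
    assume "P_set A \<alpha>"
    then have "card BZ = card BN + card \<alpha>" using bN bZ unfolding P_set_def by simp
    then show "DD A n \<alpha>" by (rule dir1[OF \<alpha>n bN(1) bZ(1)])
  next
    assume "DD A n \<alpha>"
    then obtain B where B: "isb B (ZZ A n \<alpha>)" "card B = card BN + card \<alpha>"
      using dir2[OF Acar Asym \<alpha>n bN(1)] by blast
    then have "card BZ = card BN + card \<alpha>" using isb_card[OF bZ(1) B(1)] by simp
    then show "P_set A \<alpha>" using bN bZ unfolding P_set_def by simp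
  qed
qed

lemma DD_pairs:
  assumes c2: "card \<alpha> \<ge> 2"
  shows "DD A n \<alpha> \<longleftrightarrow> (\<forall>\<gamma>. \<gamma> \<subseteq> \<alpha> \<and> card \<gamma> = 2 \<longrightarrow> DD A n \<gamma>)"
proof
  assume D: "DD A n \<alpha>"
  show "\<forall>\<gamma>. \<gamma> \<subseteq> \<alpha> \<and> card \<gamma> = 2 \<longrightarrow> DD A n \<gamma>" using D unfolding DD_def by blast
next
  assume H: "\<forall>\<gamma>. \<gamma> \<subseteq> \<alpha> \<and> card \<gamma> = 2 \<longrightarrow> DD A n \<gamma>"
  have fin: "finite \<alpha>" using c2 card.infinite by fastforce
  have pair: "DD A n {i, j}" if "i \<in> \<alpha>" "j \<in> \<alpha>" "i \<noteq> j" for i j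
    using H that by auto
  show "DD A n \<alpha>" unfolding DD_def
  proof (rule ballI)
    fix i assume i: "i \<in> \<alpha>"
    have "card (\<alpha> - {i}) \<ge> 1" using c2 i fin by (simp add: card_Diff_singleton)
    then obtain j0 where j0: "j0 \<in> \<alpha>" "j0 \<noteq> i"
      by (metis DiffE One_nat_def card.empty ex_in_conv insertI1 not_less_eq_eq zero_le)
    have D0: "DD A n {i, j0}" using pair[OF i j0(1)] j0(2) by auto
    have ex: "\<exists>y\<in>Vn n. Av A n y = ee i" using D0 unfolding DD_def by auto
    have van: "\<forall>j\<in>\<alpha>. \<forall>y\<in>Vn n. Av A n y = ee i \<longrightarrow> y j = 0"
    proof (intro ballI impI)
      fix j y assume j: "j \<in> \<alpha>" and y: "y \<in> Vn n" and ay: "Av A n y = ee i"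
      show "y j = 0"
      proof (cases "j = i")
        case True then show ?thesis using D0 y ay unfolding DD_def by auto
      next
        case False
        then have "DD A n {i, j}" using pair[OF i j] by auto
        then show ?thesis using y ay unfolding DD_def by auto
      qed
    qed
    show "(\<exists>y\<in>Vn n. Av A n y = ee i) \<and> (\<forall>j\<in>\<alpha>. \<forall>y\<in>Vn n. Av A n y = ee i \<longrightarrow> y j = 0)"
      using ex van by blast
  qed
qed

theorem theorem2p5:
  fixes A :: "real mat" and n :: nat and \<alpha> :: "nat set"
  assumes "A \<in> carrier_mat n n"
    and "A\<^sup>T = A"
    and "\<alpha> \<subseteq> {0..<n}"
    and "card \<alpha> \<ge> 2"
  shows "P_set A \<alpha> \<longleftrightarrow> (\<forall>\<gamma>. \<gamma> \<subseteq> \<alpha> \<and> card \<gamma> = 2 \<longrightarrow> P_set A \<gamma>)"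
proof -
  have "P_set A \<alpha> \<longleftrightarrow> DD A n \<alpha>" by (rule charP[OF assms(1,2,3)])
  also have "\<dots> \<longleftrightarrow> (\<forall>\<gamma>. \<gamma> \<subseteq> \<alpha> \<and> card \<gamma> = 2 \<longrightarrow> DD A n \<gamma>)" by (rule DD_pairs[OF assms(4)])
  also have "\<dots> \<longleftrightarrow> (\<forall>\<gamma>. \<gamma> \<subseteq> \<alpha> \<and> card \<gamma> = 2 \<longrightarrow> P_set A \<gamma>)"
  proof -
    have "DD A n \<gamma> \<longleftrightarrow> P_set A \<gamma>" if "\<gamma> \<subseteq> \<alpha>" for \<gamma>
      using charP[OF assms(1,2), of \<gamma>] that assms(3) by auto
    then show ?thesis by blast
  qed
  finally show ?thesis .
qed

end
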